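(* Let $f_0\colon X\hookrightarrow Y_0$ and $f_1\colon X\hookrightarrow Y_1$ be embeddings in $\mathbf{MetCH_{sep}}$ and let $\lambda_0\colon Y_0\to P$, $\lambda_1\colon Y_1\to P$ (with $\lambda_0\circ f_0=\lambda_1\circ f_1$) be their pushout in $\mathbf{MetCH_{sep}}$. Then for all $i,j\in\{0,1\}$, $u\in Y_i$, $v\in Y_j$: $$d_P(\lambda_i(u),\lambda_j(v))=\begin{cases} d_{Y_i}(u,v) & \text{if } i=j,\\ \inf_{x\in X}\big(d_{Y_i}(u,f_i(x))+d_{Y_j}(f_j(x),v)\big) & \text{if } i\neq j.\end{cases}$$
   Context: A metric on a set $X$ is a map $d\colon X\times X\to[0,\infty]$ with $d(x,x)=0$ and $d(x,z)\le d(x,y)+d(y,z)$ (not necessarily symmetric, $\infty$ allowed); separated means $d(x,y)=0=d(y,x)$ implies $x=y$. A separated metric compact Hausdorff space is a compact Hausdorff space with a separated metric $d\colon X\times X\to[0,\infty]$ continuous with respect to the upper topology on $[0,\infty]$ (open sets $]u,\infty]$, plus $\emptyset$ and $[0,\infty]$). $\mathbf{MetCH_{sep}}$: these spaces with continuous non-expansive maps as morphisms. An embedding is an injective morphism $f$ with $d_X(x,y)=d_Y(f(x),f(y))$ for all $x,y$. *)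

theory Defs
  imports "HOL-Analysis.Analysis" "HOL-Library.Extended_Nonnegative_Real"
begin

text \<open>A (generalised, possibly asymmetric, possibly infinite) metric space structure on the
  carrier of a topology: the space is the pair (T, d) with carrier topspace T and
  d valued in [0,\<infinity>] (ennreal).  Continuity of d w.r.t. the upper topology on [0,\<infinity>]
  means the preimage of every ]u,\<infinity>] is open in the product topology.\<close>

definition metCH_sep :: "'a topology \<Rightarrow> ('a \<Rightarrow> 'a \<Rightarrow> ennreal) \<Rightarrow> bool" where
  "metCH_sep T d \<longleftrightarrow>
     compact_space T \<and> Hausdorff_space T \<and>
     (\<forall>x\<in>topspace T. d x x = 0) \<and>
     (\<forall>x\<in>topspace T. \<forall>y\<in>topspace T. \<forall>z\<in>topspace T. d x z \<le> d x y + d y z) \<and>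
     (\<forall>x\<in>topspace T. \<forall>y\<in>topspace T. d x y = 0 \<and> d y x = 0 \<longrightarrow> x = y) \<and>
     (\<forall>u::ennreal. openin (prod_topology T T)
         {p \<in> topspace T \<times> topspace T. u < d (fst p) (snd p)})"

definition metCH_mor :: "'a topology \<Rightarrow> ('a \<Rightarrow> 'a \<Rightarrow> ennreal) \<Rightarrow>
    'b topology \<Rightarrow> ('b \<Rightarrow> 'b \<Rightarrow> ennreal) \<Rightarrow> ('a \<Rightarrow> 'b) \<Rightarrow> bool" where
  "metCH_mor T d T' d' f \<longleftrightarrow>
     continuous_map T T' f \<and>
     (\<forall>x\<in>topspace T. \<forall>y\<in>topspace T. d' (f x) (f y) \<le> d x y)"

definition metCH_emb :: "'a topology \<Rightarrow> ('a \<Rightarrow> 'a \<Rightarrow> ennreal) \<Rightarrow>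
    'b topology \<Rightarrow> ('b \<Rightarrow> 'b \<Rightarrow> ennreal) \<Rightarrow> ('a \<Rightarrow> 'b) \<Rightarrow> bool" where
  "metCH_emb T d T' d' f \<longleftrightarrow>
     metCH_mor T d T' d' f \<and> inj_on f (topspace T) \<and>
     (\<forall>x\<in>topspace T. \<forall>y\<in>topspace T. d' (f x) (f y) = d x y)"

text \<open>The universal property is stated for all test
  objects whose carrier lives in the type 'z (given as a TYPE argument); maps are
  identified when they agree on the carrier.\<close>
definition metCH_pushout ::
  "'z itself \<Rightarrow>
   'x topology \<Rightarrow> ('x \<Rightarrow> 'x \<Rightarrow> ennreal) \<Rightarrow>
   'a topology \<Rightarrow> ('a \<Rightarrow> 'a \<Rightarrow> ennreal) \<Rightarrow>
   'b topology \<Rightarrow> ('b \<Rightarrow> 'b \<Rightarrow> ennreal) \<Rightarrow>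
   ('x \<Rightarrow> 'a) \<Rightarrow> ('x \<Rightarrow> 'b) \<Rightarrow>
   'p topology \<Rightarrow> ('p \<Rightarrow> 'p \<Rightarrow> ennreal) \<Rightarrow>
   ('a \<Rightarrow> 'p) \<Rightarrow> ('b \<Rightarrow> 'p) \<Rightarrow> bool" where
  "metCH_pushout _ X dX Y0 d0 Y1 d1 f0 f1 P dP l0 l1 \<longleftrightarrow>
     metCH_sep P dP \<and> metCH_mor Y0 d0 P dP l0 \<and> metCH_mor Y1 d1 P dP l1 \<and>
     (\<forall>x\<in>topspace X. l0 (f0 x) = l1 (f1 x)) \<and>
     (\<forall>(Z::'z topology) dZ g0 g1.
        metCH_sep Z dZ \<and> metCH_mor Y0 d0 Z dZ g0 \<and> metCH_mor Y1 d1 Z dZ g1 \<and>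
        (\<forall>x\<in>topspace X. g0 (f0 x) = g1 (f1 x)) \<longrightarrow>
          (\<exists>h. metCH_mor P dP Z dZ h \<and>
               (\<forall>y\<in>topspace Y0. h (l0 y) = g0 y) \<and>
               (\<forall>y\<in>topspace Y1. h (l1 y) = g1 y)) \<and>
          (\<forall>h h'. metCH_mor P dP Z dZ h \<and>
               (\<forall>y\<in>topspace Y0. h (l0 y) = g0 y) \<and>
               (\<forall>y\<in>topspace Y1. h (l1 y) = g1 y) \<and>
               metCH_mor P dP Z dZ h' \<and>
               (\<forall>y\<in>topspace Y0. h' (l0 y) = g0 y) \<and>
               (\<forall>y\<in>topspace Y1. h' (l1 y) = g1 y) \<longrightarrow>
               (\<forall>p\<in>topspace P. h p = h' p)))"

end

theory Submission
  imports Defs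
begin


lemma ennreal_add_INF:
  assumes "A \<noteq> {}"
  shows "k + (INF x\<in>A. f x) = (INF x\<in>A. k + f x::ennreal)"
proof -
  have "(\<lambda>x. k + x) (Inf (f ` A)) = Inf ((\<lambda>x. k + x) ` (f ` A))"
    apply (rule continuous_at_Inf_mono)
    apply (auto simp: mono_def assms add_left_mono)
    by (intro continuous_intros)
  then show ?thesis by (simp add: image_comp)
qed

lemma le_add_INF:
  assumes "\<And>x. x \<in> A \<Longrightarrow> c \<le> k + f x"
  shows "c \<le> k + (INF x\<in>A. f x::ennreal)"
proof (cases "A = {}")
  case True then show ?thesis by simp
next
  case False
  then show ?thesis using assms by (simp add: ennreal_add_INF INF_greatest)
qed

lemma le_INF_add:
  assumes "\<And>x. x \<in> A \<Longrightarrow> c \<le> f x + k"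
  shows "c \<le> (INF x\<in>A. f x::ennreal) + k"
proof -
  have "c \<le> k + (INF x\<in>A. f x)"
  proof (rule le_add_INF)
    fix x assume "x \<in> A"
    then have "c \<le> f x + k" by (rule assms)
    then show "c \<le> k + f x" by (simp only: add.commute)
  qed
  then show ?thesis by (simp only: add.commute)
qed

lemma ennreal_split_lt:
  fixes t a b :: ennreal
  assumes "t < a + b"
  shows "t < a \<or> t < b \<or> (\<exists>r s. r < a \<and> s < b \<and> t \<le> r + s \<and> r < top \<and> s < top)"
proof (rule ccontr)
  assume H: "\<not> ?thesis"
  then have ta: "a \<le> t" and tb: "b \<le> t" by auto
  have tt: "t < top" using assms less_le_trans top_greatest by blast
  obtain T where T: "t = ennreal T" "T \<ge> 0" using tt by (cases t) auto
  obtain A where A: "a = ennreal A" "A \<ge> 0" using ta tt by (cases a) auto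
  obtain B where B: "b = ennreal B" "B \<ge> 0" using tb tt by (cases b) auto
  have "T < A + B" using assms T A B by (simp add: ennreal_plus[symmetric] ennreal_less_iff del: ennreal_plus)
  moreover have "A \<le> T" "B \<le> T" using ta tb T A B by auto
  ultimately have "0 < A + B - T" "A + B - T \<le> A" "A + B - T \<le> B" by auto
  define e where "e = A + B - T"
  have "ennreal (A - e/2) < a" "ennreal (B - e/2) < b"
    using \<open>0 < A + B - T\<close> \<open>A + B - T \<le> A\<close> \<open>A + B - T \<le> B\<close> A B e_def
    by (auto simp: ennreal_less_iff)
  moreover have "t \<le> ennreal (A - e/2) + ennreal (B - e/2)"
  proof -
    have "ennreal (A - e/2) + ennreal (B - e/2) = ennreal (A - e/2 + (B - e/2))"
      by (rule ennreal_plus[symmetric]) (use \<open>A \<le> T\<close> \<open>B \<le> T\<close> A B e_def in auto)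
    also have "A - e/2 + (B - e/2) = T" using e_def by simp
    finally show ?thesis using T by simp
  qed
  ultimately show False using H by (meson ennreal_less_top)
qed

lemma ennreal_add_less2:
  fixes r s a b :: ennreal
  assumes "r < a" "s < b" "s < top"
  shows "r + s < a + b"
proof -
  have "s + r < s + a" using assms by (simp add: ennreal_add_left_cancel_less)
  then have "r + s < a + s" by (simp add: add.commute)
  also have "\<dots> \<le> a + b" using assms by (simp add: add_left_mono)
  finally show ?thesis .
qed

definition lsc :: "'a topology \<Rightarrow> ('a \<Rightarrow> ennreal) \<Rightarrow> bool" where
  "lsc W \<phi> \<longleftrightarrow> (\<forall>t. openin W {q \<in> topspace W. t < \<phi> q})"

lemma lsc_add:
  assumes "lsc W \<phi>" "lsc W \<psi>"
  shows "lsc W (\<lambda>q. \<phi> q + \<psi> q)"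
  unfolding lsc_def
proof
  fix t
  show "openin W {q \<in> topspace W. t < \<phi> q + \<psi> q}"
  proof (subst openin_subopen, intro ballI)
    fix q0 assume q0: "q0 \<in> {q \<in> topspace W. t < \<phi> q + \<psi> q}"
    then have "t < \<phi> q0 \<or> t < \<psi> q0 \<or> (\<exists>r s. r < \<phi> q0 \<and> s < \<psi> q0 \<and> t \<le> r + s \<and> r < top \<and> s < top)"
      by (intro ennreal_split_lt) auto
    then show "\<exists>T. openin W T \<and> q0 \<in> T \<and> T \<subseteq> {q \<in> topspace W. t < \<phi> q + \<psi> q}"
    proof (elim disjE exE conjE)
      assume "t < \<phi> q0"
      then show ?thesis using q0 assms
        by (intro exI[of _ "{q \<in> topspace W. t < \<phi> q}"])
           (auto simp: lsc_def intro: less_le_trans add_increasing2)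
    next
      assume "t < \<psi> q0"
      then show ?thesis using q0 assms
        by (intro exI[of _ "{q \<in> topspace W. t < \<psi> q}"])
           (auto simp: lsc_def intro: less_le_trans add_increasing)
    next
      fix r s assume rs: "r < \<phi> q0" "s < \<psi> q0" "t \<le> r + s" "r < top" "s < top"
      have o: "openin W ({q \<in> topspace W. r < \<phi> q} \<inter> {q \<in> topspace W. s < \<psi> q})"
        using assms by (auto simp: lsc_def)
      have "{q \<in> topspace W. r < \<phi> q} \<inter> {q \<in> topspace W. s < \<psi> q} \<subseteq> {q \<in> topspace W. t < \<phi> q + \<psi> q}"
        using rs by (auto intro: le_less_trans[OF _ ennreal_add_less2])
      with o q0 rs show ?thesis by blast
    qed
  qed
qed

lemma lsc_comp:
  assumes "continuous_map W Y h" "lsc Y \<phi>"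
  shows "lsc W (\<lambda>q. \<phi> (h q))"
  unfolding lsc_def
proof
  fix t
  have eq: "{q \<in> topspace W. t < \<phi> (h q)} = {q \<in> topspace W. h q \<in> {p \<in> topspace Y. t < \<phi> p}}"
    using assms(1) by (auto simp: continuous_map_def)
  have "openin W {q \<in> topspace W. h q \<in> {p \<in> topspace Y. t < \<phi> p}}"
    by (rule openin_continuous_map_preimage[OF assms(1)]) (use assms(2) in \<open>simp add: lsc_def\<close>)
  then show "openin W {q \<in> topspace W. t < \<phi> (h q)}"
    by (simp only: eq)
qed

lemma lsc_metric:
  assumes "metCH_sep Y d"
  shows "lsc (prod_topology Y Y) (\<lambda>p. d (fst p) (snd p))"
  using assms by (simp add: lsc_def metCH_sep_def topspace_prod_topology)

lemma lsc_closed: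
  assumes "lsc W \<phi>"
  shows "closedin W {q \<in> topspace W. \<phi> q \<le> t}"
proof -
  have "topspace W - {q \<in> topspace W. \<phi> q \<le> t} = {q \<in> topspace W. t < \<phi> q}" by auto
  then show ?thesis using assms by (simp add: closedin_def lsc_def)
qed

lemma lsc_attain:
  assumes "compact_space W" "topspace W \<noteq> {}" "lsc W \<phi>"
  shows "\<exists>x\<in>topspace W. \<phi> x = (INF x\<in>topspace W. \<phi> x)"
proof (cases "(INF x\<in>topspace W. \<phi> x) = top")
  case True
  then show ?thesis using assms(2) by (metis INF_lower ex_in_conv top_unique)
next
  case False
  define m where "m = (INF x\<in>topspace W. \<phi> x)"
  define U where "U = (\<lambda>t. {q \<in> topspace W. \<phi> q \<le> t}) ` {t. m < t}"
  have fip: "\<forall>\<U>. (\<forall>C\<in>\<U>. closedin W C) \<and> (\<forall>\<F>. finite \<F> \<and> \<F> \<subseteq> \<U> \<longrightarrow> \<Inter>\<F> \<noteq> {}) \<longrightarrow> \<Inter>\<U> \<noteq> {}"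
    using assms(1) compact_space_fip by blast
  have "\<Inter>U \<noteq> {}"
  proof (rule fip[rule_format], intro conjI ballI allI impI)
    fix C assume "C \<in> U" then show "closedin W C"
      using lsc_closed[OF assms(3)] by (auto simp: U_def)
  next
    fix F assume F: "finite F \<and> F \<subseteq> U"
    then obtain C where C: "C \<subseteq> {t. m < t}" "finite C" "F = (\<lambda>t. {q \<in> topspace W. \<phi> q \<le> t}) ` C"
      unfolding U_def by (meson finite_subset_image)
    show "\<Inter>F \<noteq> {}"
    proof (cases "C = {}")
      case True then show ?thesis using C by simp
    next
      case False
      then have "m < Min C" using C by auto
      then obtain x where x: "x \<in> topspace W" "\<phi> x < Min C"
        unfolding m_def by (auto simp: INF_less_iff)
      then have "x \<in> \<Inter>F" using C by (auto intro: less_imp_le less_le_trans[OF _ Min_le])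
      then show ?thesis by blast
    qed
  qed
  then obtain x where x: "x \<in> \<Inter>U" by blast
  have mt: "m < top" using False m_def top.not_eq_extremum by blast
  then have "x \<in> topspace W" using x by (auto simp: U_def)
  moreover have "\<phi> x \<le> m"
  proof (rule dense_ge)
    fix y assume "m < y" then show "\<phi> x \<le> y" using x by (auto simp: U_def)
  qed
  moreover have "m \<le> \<phi> x" using \<open>x \<in> topspace W\<close> m_def by (auto intro: INF_lower)
  ultimately show ?thesis unfolding m_def by (intro bexI[of _ x]) auto
qed




locale glue =
  fixes X :: "'x topology" and dX :: "'x \<Rightarrow> 'x \<Rightarrow> ennreal"
    and Y0 :: "'a topology" and d0 :: "'a \<Rightarrow> 'a \<Rightarrow> ennreal"
    and Y1 :: "'b topology" and d1 :: "'b \<Rightarrow> 'b \<Rightarrow> ennreal"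
    and f0 :: "'x \<Rightarrow> 'a" and f1 :: "'x \<Rightarrow> 'b"
  assumes sX: "metCH_sep X dX" and s0: "metCH_sep Y0 d0" and s1: "metCH_sep Y1 d1"
    and e0: "metCH_emb X dX Y0 d0 f0" and e1: "metCH_emb X dX Y1 d1 f1"
begin

lemma f0_cont: "continuous_map X Y0 f0" using e0 by (simp add: metCH_emb_def metCH_mor_def)
lemma f1_cont: "continuous_map X Y1 f1" using e1 by (simp add: metCH_emb_def metCH_mor_def)
lemma f0_in: "x \<in> topspace X \<Longrightarrow> f0 x \<in> topspace Y0"
  using continuous_map_image_subset_topspace[OF f0_cont] by blast
lemma f1_in: "x \<in> topspace X \<Longrightarrow> f1 x \<in> topspace Y1"
  using continuous_map_image_subset_topspace[OF f1_cont] by blast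
lemma f0_inj: "inj_on f0 (topspace X)" using e0 by (simp add: metCH_emb_def)
lemma f1_inj: "inj_on f1 (topspace X)" using e1 by (simp add: metCH_emb_def)
lemma f0_iso: "x \<in> topspace X \<Longrightarrow> y \<in> topspace X \<Longrightarrow> d0 (f0 x) (f0 y) = dX x y"
  using e0 by (simp add: metCH_emb_def)
lemma f1_iso: "x \<in> topspace X \<Longrightarrow> y \<in> topspace X \<Longrightarrow> d1 (f1 x) (f1 y) = dX x y"
  using e1 by (simp add: metCH_emb_def)
lemma d0_0: "a \<in> topspace Y0 \<Longrightarrow> d0 a a = 0" using s0 by (simp add: metCH_sep_def)
lemma d1_0: "a \<in> topspace Y1 \<Longrightarrow> d1 a a = 0" using s1 by (simp add: metCH_sep_def)
lemma d0_tri: "a \<in> topspace Y0 \<Longrightarrow> b \<in> topspace Y0 \<Longrightarrow> c \<in> topspace Y0 \<Longrightarrow> d0 a c \<le> d0 a b + d0 b c"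
  using s0 by (simp add: metCH_sep_def)
lemma d1_tri: "a \<in> topspace Y1 \<Longrightarrow> b \<in> topspace Y1 \<Longrightarrow> c \<in> topspace Y1 \<Longrightarrow> d1 a c \<le> d1 a b + d1 b c"
  using s1 by (simp add: metCH_sep_def)

definition M :: "'a \<Rightarrow> 'b \<Rightarrow> ennreal" where
  "M a b = (INF x\<in>topspace X. d0 a (f0 x) + d1 (f1 x) b)"

lemma M_f1:
  assumes "a \<in> topspace Y0" "x \<in> topspace X"
  shows "M a (f1 x) = d0 a (f0 x)"
proof (rule antisym)
  show "M a (f1 x) \<le> d0 a (f0 x)"
    unfolding M_def using assms by (intro INF_lower2[of x]) (auto simp: d1_0 f1_in)
  show "d0 a (f0 x) \<le> M a (f1 x)"
    unfolding M_def
  proof (rule INF_greatest)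
    fix x' assume x': "x' \<in> topspace X"
    have "d0 a (f0 x) \<le> d0 a (f0 x') + d0 (f0 x') (f0 x)"
      using assms x' by (intro d0_tri) (auto simp: f0_in)
    also have "\<dots> = d0 a (f0 x') + d1 (f1 x') (f1 x)"
      using assms x' by (simp add: f0_iso f1_iso)
    finally show "d0 a (f0 x) \<le> d0 a (f0 x') + d1 (f1 x') (f1 x)" .
  qed
qed

lemma M_f0:
  assumes "b \<in> topspace Y1" "x \<in> topspace X"
  shows "M (f0 x) b = d1 (f1 x) b"
proof (rule antisym)
  show "M (f0 x) b \<le> d1 (f1 x) b"
    unfolding M_def using assms by (intro INF_lower2[of x]) (auto simp: d0_0 f0_in)
  show "d1 (f1 x) b \<le> M (f0 x) b"
    unfolding M_def
  proof (rule INF_greatest)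
    fix x' assume x': "x' \<in> topspace X"
    have "d1 (f1 x) b \<le> d1 (f1 x) (f1 x') + d1 (f1 x') b"
      using assms x' by (intro d1_tri) (auto simp: f1_in)
    also have "\<dots> = d0 (f0 x) (f0 x') + d1 (f1 x') b"
      using assms x' by (simp add: f0_iso f1_iso)
    finally show "d1 (f1 x) b \<le> d0 (f0 x) (f0 x') + d1 (f1 x') b" .
  qed
qed

lemma tri001:
  assumes "a \<in> topspace Y0" "b \<in> topspace Y0" "c \<in> topspace Y1"
  shows "M a c \<le> d0 a b + M b c"
  unfolding M_def
proof (rule le_add_INF)
  fix x assume x: "x \<in> topspace X"
  have "(INF x\<in>topspace X. d0 a (f0 x) + d1 (f1 x) c) \<le> d0 a (f0 x) + d1 (f1 x) c"
    using x by (rule INF_lower)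
  also have "\<dots> \<le> (d0 a b + d0 b (f0 x)) + d1 (f1 x) c"
    using assms x by (intro add_right_mono d0_tri) (auto simp: f0_in)
  also have "\<dots> = d0 a b + (d0 b (f0 x) + d1 (f1 x) c)"
    by (rule add.assoc)
  finally show "(INF x\<in>topspace X. d0 a (f0 x) + d1 (f1 x) c) \<le> d0 a b + (d0 b (f0 x) + d1 (f1 x) c)" .
qed

lemma tri011:
  assumes "a \<in> topspace Y0" "b \<in> topspace Y1" "c \<in> topspace Y1"
  shows "M a c \<le> M a b + d1 b c"
  unfolding M_def
proof (rule le_INF_add)
  fix x assume x: "x \<in> topspace X"
  have "(INF x\<in>topspace X. d0 a (f0 x) + d1 (f1 x) c) \<le> d0 a (f0 x) + d1 (f1 x) c"
    using x by (rule INF_lower)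
  also have "\<dots> \<le> d0 a (f0 x) + (d1 (f1 x) b + d1 b c)"
    using assms x by (intro add_left_mono d1_tri) (auto simp: f1_in)
  also have "\<dots> = d0 a (f0 x) + d1 (f1 x) b + d1 b c"
    by (rule add.assoc[symmetric])
  finally show "(INF x\<in>topspace X. d0 a (f0 x) + d1 (f1 x) c) \<le> d0 a (f0 x) + d1 (f1 x) b + d1 b c" .
qed

lemma tri010:
  assumes "a \<in> topspace Y0" "b \<in> topspace Y1" "c \<in> topspace Y0"
  shows "d0 a c \<le> M a b + (INF x\<in>topspace X. d1 b (f1 x) + d0 (f0 x) c)"
  unfolding M_def
proof (rule le_INF_add)
  fix x assume x: "x \<in> topspace X"
  show "d0 a c \<le> (d0 a (f0 x) + d1 (f1 x) b) + (INF x\<in>topspace X. d1 b (f1 x) + d0 (f0 x) c)"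
  proof (rule le_add_INF)
    fix x' assume x': "x' \<in> topspace X"
    have h0: "d0 a c \<le> d0 a (f0 x) + d0 (f0 x) c"
      using assms x by (intro d0_tri) (auto simp: f0_in)
    have h1: "d0 (f0 x) c \<le> d0 (f0 x) (f0 x') + d0 (f0 x') c"
      using assms x x' by (intro d0_tri) (auto simp: f0_in)
    have "d0 (f0 x) (f0 x') = d1 (f1 x) (f1 x')" using x x' by (simp add: f0_iso f1_iso)
    also have "\<dots> \<le> d1 (f1 x) b + d1 b (f1 x')"
      using assms x x' by (intro d1_tri) (auto simp: f1_in)
    finally have h2: "d0 (f0 x) (f0 x') \<le> d1 (f1 x) b + d1 b (f1 x')" .
    have h5: "d0 (f0 x) (f0 x') + d0 (f0 x') c \<le> (d1 (f1 x) b + d1 b (f1 x')) + d0 (f0 x') c"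
      using h2 by (rule add_right_mono)
    have h3: "d0 a (f0 x) + d0 (f0 x) c \<le> d0 a (f0 x) + ((d1 (f1 x) b + d1 b (f1 x')) + d0 (f0 x') c)"
      using order_trans[OF h1 h5] by (rule add_left_mono)
    have h4: "d0 a (f0 x) + ((d1 (f1 x) b + d1 b (f1 x')) + d0 (f0 x') c) = d0 a (f0 x) + d1 (f1 x) b + (d1 b (f1 x') + d0 (f0 x') c)"
      by (simp only: add.assoc)
    show "d0 a c \<le> d0 a (f0 x) + d1 (f1 x) b + (d1 b (f1 x') + d0 (f0 x') c)"
      using order_trans[OF h0 h3] unfolding h4 .
  qed
qed

end
sublocale glue \<subseteq> sw: glue X dX Y1 d1 Y0 d0 f1 f0
  by (unfold_locales) (rule sX s1 s0 e1 e0)+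





context glue begin

lemma cX: "compact_space X" using sX by (simp add: metCH_sep_def)
lemma c0: "compact_space Y0" using s0 by (simp add: metCH_sep_def)
lemma c1: "compact_space Y1" using s1 by (simp add: metCH_sep_def)
lemma h0: "Hausdorff_space Y0" using s0 by (simp add: metCH_sep_def)
lemma h1: "Hausdorff_space Y1" using s1 by (simp add: metCH_sep_def)

lemma M_lsc: "lsc (prod_topology (prod_topology Y0 Y1) X)
   (\<lambda>q. d0 (fst (fst q)) (f0 (snd q)) + d1 (f1 (snd q)) (snd (fst q)))"
proof (rule lsc_add)
  have "continuous_map (prod_topology (prod_topology Y0 Y1) X) (prod_topology Y0 Y0) (\<lambda>q. (fst (fst q), f0 (snd q)))"
    by (intro continuous_map_pairedI continuous_map_compose[OF continuous_map_fst continuous_map_fst, unfolded o_def]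
          continuous_map_compose[OF continuous_map_snd f0_cont, unfolded o_def])
  from lsc_comp[OF this lsc_metric[OF s0]]
  show "lsc (prod_topology (prod_topology Y0 Y1) X) (\<lambda>q. d0 (fst (fst q)) (f0 (snd q)))" by simp
  have "continuous_map (prod_topology (prod_topology Y0 Y1) X) (prod_topology Y1 Y1) (\<lambda>q. (f1 (snd q), snd (fst q)))"
    by (intro continuous_map_pairedI continuous_map_compose[OF continuous_map_fst continuous_map_snd, unfolded o_def]
          continuous_map_compose[OF continuous_map_snd f1_cont, unfolded o_def])
  from lsc_comp[OF this lsc_metric[OF s1]]
  show "lsc (prod_topology (prod_topology Y0 Y1) X) (\<lambda>q. d1 (f1 (snd q)) (snd (fst q)))" by simp
qed

lemma M_attain:
  assumes "a \<in> topspace Y0" "b \<in> topspace Y1" "topspace X \<noteq> {}"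
  shows "\<exists>x\<in>topspace X. M a b = d0 a (f0 x) + d1 (f1 x) b"
proof -
  have "continuous_map X (prod_topology (prod_topology Y0 Y1) X) (\<lambda>x. ((a, b), x))"
    using assms by (intro continuous_map_pairedI) (auto simp: continuous_map_id[unfolded id_def])
  from lsc_comp[OF this M_lsc]
  have "lsc X (\<lambda>x. d0 a (f0 x) + d1 (f1 x) b)" by simp
  from lsc_attain[OF cX assms(3) this] show ?thesis unfolding M_def by metis
qed

lemma M_le_iff:
  assumes "a \<in> topspace Y0" "b \<in> topspace Y1" "u < top"
  shows "M a b \<le> u \<longleftrightarrow> (\<exists>x\<in>topspace X. d0 a (f0 x) + d1 (f1 x) b \<le> u)"
proof
  assume le: "M a b \<le> u"
  show "\<exists>x\<in>topspace X. d0 a (f0 x) + d1 (f1 x) b \<le> u"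
  proof (cases "topspace X = {}")
    case True
    then have "M a b = top" unfolding M_def True by simp
    then show ?thesis using le assms(3) by simp
  next
    case False
    then show ?thesis using M_attain[OF assms(1,2) False] le by metis
  qed
next
  assume "\<exists>x\<in>topspace X. d0 a (f0 x) + d1 (f1 x) b \<le> u"
  then show "M a b \<le> u" unfolding M_def by (meson INF_lower2)
qed

lemma M_closed:
  "closedin (prod_topology Y0 Y1) {p \<in> topspace (prod_topology Y0 Y1). M (fst p) (snd p) \<le> u}"
proof (cases "u = top")
  case True
  then have "{p \<in> topspace (prod_topology Y0 Y1). M (fst p) (snd p) \<le> u} = topspace (prod_topology Y0 Y1)"
    by auto
  then show ?thesis by (metis closedin_topspace)
next
  case False
  then have ut: "u < top" by (simp add: top.not_eq_extremum)
  let ?W = "prod_topology (prod_topology Y0 Y1) X"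
  let ?T = "{q \<in> topspace ?W. d0 (fst (fst q)) (f0 (snd q)) + d1 (f1 (snd q)) (snd (fst q)) \<le> u}"
  have "closedin ?W ?T" by (rule lsc_closed[OF M_lsc])
  moreover have "compact_space ?W" using c0 c1 cX by (simp add: compact_space_prod_topology)
  ultimately have "compactin ?W ?T" by (rule closedin_compact_space[rotated])
  then have "compactin (prod_topology Y0 Y1) (fst ` ?T)"
    by (rule image_compactin) (rule continuous_map_fst)
  then have "closedin (prod_topology Y0 Y1) (fst ` ?T)"
    by (rule compactin_imp_closedin[rotated]) (simp add: Hausdorff_space_prod_topology h0 h1)
  moreover have "fst ` ?T = {p \<in> topspace (prod_topology Y0 Y1). M (fst p) (snd p) \<le> u}"
  proof (rule set_eqI)
    fix p :: "'a \<times> 'b"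
    show "p \<in> fst ` ?T \<longleftrightarrow> p \<in> {p \<in> topspace (prod_topology Y0 Y1). M (fst p) (snd p) \<le> u}"
    proof
      assume "p \<in> fst ` ?T"
      then obtain x where "(p, x) \<in> ?T" by force
      then show "p \<in> {p \<in> topspace (prod_topology Y0 Y1). M (fst p) (snd p) \<le> u}"
        using M_le_iff[OF _ _ ut, of "fst p" "snd p"] by auto
    next
      assume p: "p \<in> {p \<in> topspace (prod_topology Y0 Y1). M (fst p) (snd p) \<le> u}"
      then obtain x where "x \<in> topspace X" "d0 (fst p) (f0 x) + d1 (f1 x) (snd p) \<le> u"
        using M_le_iff[OF _ _ ut, of "fst p" "snd p"] by auto
      then have "(p, x) \<in> ?T" using p by auto
      then show "p \<in> fst ` ?T" by force
    qed
  qed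
  ultimately show ?thesis by simp
qed

lemma M_zero:
  assumes "a \<in> topspace Y0" "b \<in> topspace Y1" "M a b = 0"
  shows "\<exists>x\<in>topspace X. d0 a (f0 x) = 0 \<and> d1 (f1 x) b = 0"
proof -
  have "topspace X \<noteq> {}" using assms(3) by (auto simp: M_def)
  then show ?thesis using M_attain[OF assms(1,2)] assms(3) by auto
qed

end

context glue begin

lemma M_sep:
  assumes a: "a \<in> topspace Y0" and b: "b \<in> topspace Y1" and "M a b = 0" "sw.M b a = 0"
  shows "\<exists>x\<in>topspace X. a = f0 x \<and> b = f1 x"
proof -
  obtain x where x: "x \<in> topspace X" "d0 a (f0 x) = 0" "d1 (f1 x) b = 0"
    using M_zero assms by blast
  obtain x' where x': "x' \<in> topspace X" "d1 b (f1 x') = 0" "d0 (f0 x') a = 0"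
    using sw.M_zero assms by blast
  have "d0 (f0 x') (f0 x) \<le> d0 (f0 x') a + d0 a (f0 x)" using a x x' by (intro d0_tri) (auto simp: f0_in)
  then have "d0 (f0 x') (f0 x) = 0" using x x' by simp
  then have z1: "d1 (f1 x') (f1 x) = 0" using x x' by (simp add: f0_iso f1_iso)
  have "d1 b (f1 x) \<le> d1 b (f1 x') + d1 (f1 x') (f1 x)" using b x x' by (intro d1_tri) (auto simp: f1_in)
  then have "d1 b (f1 x) = 0" using x' z1 by simp
  then have bx: "b = f1 x" using s1 b x f1_in unfolding metCH_sep_def by blast
  have "d1 (f1 x) (f1 x') \<le> d1 (f1 x) b + d1 b (f1 x')" using b x x' by (intro d1_tri) (auto simp: f1_in)
  then have "d1 (f1 x) (f1 x') = 0" using x x' by simp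
  then have z2: "d0 (f0 x) (f0 x') = 0" using x x' by (simp add: f0_iso f1_iso)
  have "d0 (f0 x) a \<le> d0 (f0 x) (f0 x') + d0 (f0 x') a" using a x x' by (intro d0_tri) (auto simp: f0_in)
  then have "d0 (f0 x) a = 0" using x' z2 by simp
  then have "a = f0 x" using s0 a x f0_in x(2) unfolding metCH_sep_def by blast
  with bx x show ?thesis by blast
qed

end



context glue begin

definition g1 :: "'b \<Rightarrow> 'a + 'b" where
  "g1 b = (if \<exists>x\<in>topspace X. b = f1 x then Inl (f0 (SOME x. x \<in> topspace X \<and> b = f1 x)) else Inr b)"

definition S :: "('a + 'b) set" where
  "S = Inl ` topspace Y0 \<union> g1 ` topspace Y1"

definition dZ :: "'a + 'b \<Rightarrow> 'a + 'b \<Rightarrow> ennreal" where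
  "dZ w w' = (case w of Inl a \<Rightarrow> (case w' of Inl b \<Rightarrow> d0 a b | Inr b \<Rightarrow> M a b)
                      | Inr a \<Rightarrow> (case w' of Inl b \<Rightarrow> sw.M a b | Inr b \<Rightarrow> d1 a b))"

definition ZT :: "('a + 'b) topology" where
  "ZT = topology (\<lambda>U. U \<subseteq> S \<and> openin Y0 {y \<in> topspace Y0. Inl y \<in> U} \<and> openin Y1 {y \<in> topspace Y1. g1 y \<in> U})"

lemma g1_f1: "x \<in> topspace X \<Longrightarrow> g1 (f1 x) = Inl (f0 x)"
proof -
  assume x: "x \<in> topspace X"
  have "(SOME x'. x' \<in> topspace X \<and> f1 x = f1 x') = x"
    by (rule some_equality) (use x f1_inj in \<open>auto dest: inj_onD\<close>)
  then show ?thesis using x unfolding g1_def by auto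
qed

lemma g1_nf: "b \<notin> f1 ` topspace X \<Longrightarrow> g1 b = Inr b"
  unfolding g1_def by auto

lemma Inl_g1:
  assumes "a \<in> topspace Y0" "b \<in> topspace Y1"
  shows "Inl a = g1 b \<longleftrightarrow> (\<exists>x\<in>topspace X. a = f0 x \<and> b = f1 x)"
proof (cases "b \<in> f1 ` topspace X")
  case True
  then obtain x where x: "x \<in> topspace X" "b = f1 x" by auto
  then have "(\<exists>x\<in>topspace X. a = f0 x \<and> b = f1 x) \<longleftrightarrow> a = f0 x"
    using f1_inj by (auto dest: inj_onD)
  then show ?thesis using x g1_f1 by auto
next
  case False
  then show ?thesis by (auto simp: g1_nf)
qed

lemma g1_inj:
  assumes "a \<in> topspace Y1" "b \<in> topspace Y1" "g1 a = g1 b"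
  shows "a = b"
proof (cases "a \<in> f1 ` topspace X"; cases "b \<in> f1 ` topspace X")
  assume "a \<in> f1 ` topspace X" "b \<in> f1 ` topspace X"
  then obtain x y where "x \<in> topspace X" "y \<in> topspace X" "a = f1 x" "b = f1 y" by auto
  then show ?thesis using assms(3) g1_f1 f0_inj by (auto dest: inj_onD)
qed (use assms in \<open>auto simp: g1_nf g1_f1\<close>)

lemma g1_in: "b \<in> topspace Y1 \<Longrightarrow> g1 b \<in> S" unfolding S_def by auto

lemma S_cases:
  assumes "w \<in> S"
  obtains a where "a \<in> topspace Y0" "w = Inl a" | b where "b \<in> topspace Y1" "w = g1 b"
  using assms unfolding S_def by auto

lemma dZ_00: "dZ (Inl a) (Inl b) = d0 a b" by (simp add: dZ_def)

lemma dZ_01: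
  assumes "a \<in> topspace Y0" "b \<in> topspace Y1"
  shows "dZ (Inl a) (g1 b) = M a b"
proof (cases "b \<in> f1 ` topspace X")
  case True
  then obtain x where x: "x \<in> topspace X" "b = f1 x" by auto
  then show ?thesis using assms by (simp add: g1_f1 dZ_def M_f1)
qed (simp add: g1_nf dZ_def)

lemma dZ_10:
  assumes "a \<in> topspace Y1" "b \<in> topspace Y0"
  shows "dZ (g1 a) (Inl b) = sw.M a b"
proof (cases "a \<in> f1 ` topspace X")
  case True
  then obtain x where x: "x \<in> topspace X" "a = f1 x" by auto
  then show ?thesis using assms by (simp add: g1_f1 dZ_def sw.M_f0)
qed (simp add: g1_nf dZ_def)

lemma dZ_11:
  assumes "a \<in> topspace Y1" "b \<in> topspace Y1"
  shows "dZ (g1 a) (g1 b) = d1 a b"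
proof (cases "a \<in> f1 ` topspace X"; cases "b \<in> f1 ` topspace X")
  assume "a \<in> f1 ` topspace X" "b \<in> f1 ` topspace X"
  then obtain x y where "x \<in> topspace X" "y \<in> topspace X" "a = f1 x" "b = f1 y" by auto
  then show ?thesis by (simp add: g1_f1 dZ_def f0_iso f1_iso)
next
  assume "a \<in> f1 ` topspace X" "b \<notin> f1 ` topspace X"
  then obtain x where "x \<in> topspace X" "a = f1 x" by auto
  then show ?thesis using assms \<open>b \<notin> _\<close> by (simp add: g1_f1 g1_nf dZ_def M_f0)
next
  assume "a \<notin> f1 ` topspace X" "b \<in> f1 ` topspace X"
  then obtain y where "y \<in> topspace X" "b = f1 y" by auto
  then show ?thesis using assms \<open>a \<notin> _\<close> by (simp add: g1_f1 g1_nf dZ_def sw.M_f1)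
next
  assume "a \<notin> f1 ` topspace X" "b \<notin> f1 ` topspace X"
  then show ?thesis by (simp add: g1_nf dZ_def)
qed

lemma istop_ZT: "istopology (\<lambda>U. U \<subseteq> S \<and> openin Y0 {y \<in> topspace Y0. Inl y \<in> U} \<and> openin Y1 {y \<in> topspace Y1. g1 y \<in> U})"
  (is "istopology ?L")
proof -
  have A: "?L (U \<inter> V)" if U: "?L U" and V: "?L V" for U V
  proof -
    have e0: "{y \<in> topspace Y0. Inl y \<in> U \<inter> V} = {y \<in> topspace Y0. Inl y \<in> U} \<inter> {y \<in> topspace Y0. Inl y \<in> V}" by auto
    have e1: "{y \<in> topspace Y1. g1 y \<in> U \<inter> V} = {y \<in> topspace Y1. g1 y \<in> U} \<inter> {y \<in> topspace Y1. g1 y \<in> V}" by auto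
    show ?thesis using U V unfolding e0 e1 by auto
  qed
  have B: "?L (\<Union>K)" if K: "\<forall>U\<in>K. ?L U" for K
  proof -
    have e0: "{y \<in> topspace Y0. Inl y \<in> \<Union>K} = \<Union>((\<lambda>U. {y \<in> topspace Y0. Inl y \<in> U}) ` K)" by auto
    have e1: "{y \<in> topspace Y1. g1 y \<in> \<Union>K} = \<Union>((\<lambda>U. {y \<in> topspace Y1. g1 y \<in> U}) ` K)" by auto
    show ?thesis using K unfolding e0 e1 by (auto intro!: openin_Union)
  qed
  show ?thesis unfolding istopology_def using A B by blast
qed

lemma openin_ZT: "openin ZT U \<longleftrightarrow> U \<subseteq> S \<and> openin Y0 {y \<in> topspace Y0. Inl y \<in> U} \<and> openin Y1 {y \<in> topspace Y1. g1 y \<in> U}"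
  unfolding ZT_def using istop_ZT by simp

lemma topspace_ZT: "topspace ZT = S"
proof -
  have "{y \<in> topspace Y0. Inl y \<in> S} = topspace Y0" by (auto simp: S_def)
  moreover have "{y \<in> topspace Y1. g1 y \<in> S} = topspace Y1" using g1_in by auto
  ultimately have "openin ZT S"
    unfolding openin_ZT by simp
  then have "S \<subseteq> topspace ZT" by (rule openin_subset)
  moreover have "topspace ZT \<subseteq> S"
    using openin_ZT openin_topspace by blast
  ultimately show ?thesis by auto
qed

lemma cont_g0: "continuous_map Y0 ZT Inl"
  unfolding continuous_map_def topspace_ZT by (auto simp: S_def openin_ZT)

lemma cont_g1: "continuous_map Y1 ZT g1"
  unfolding continuous_map_def topspace_ZT by (auto simp: g1_in openin_ZT)

lemma g_compat: "x \<in> topspace X \<Longrightarrow> Inl (f0 x) = g1 (f1 x)"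
  by (simp add: g1_f1)

end



context glue begin

lemma closed_f0_pre:
  assumes "closedin Y1 C1"
  shows "closedin Y0 (f0 ` {x \<in> topspace X. f1 x \<in> C1})"
proof -
  have "closedin X {x \<in> topspace X. f1 x \<in> C1}"
    by (rule closedin_continuous_map_preimage[OF f1_cont assms])
  then have "compactin X {x \<in> topspace X. f1 x \<in> C1}" by (rule closedin_compact_space[OF cX])
  then have "compactin Y0 (f0 ` {x \<in> topspace X. f1 x \<in> C1})" by (rule image_compactin[OF _ f0_cont])
  then show ?thesis by (rule compactin_imp_closedin[OF h0])
qed

end

context glue begin

lemma closed_images:
  assumes C0: "closedin Y0 C0" and C1: "closedin Y1 C1"
  shows "closedin ZT (Inl ` C0 \<union> g1 ` C1)"
proof -
  have C0s: "C0 \<subseteq> topspace Y0" and C1s: "C1 \<subseteq> topspace Y1" using C0 C1 closedin_subset by auto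
  let ?T = "Inl ` C0 \<union> g1 ` C1"
  have sub: "?T \<subseteq> S" using C0s C1s g1_in unfolding S_def by auto
  have e0: "{y \<in> topspace Y0. Inl y \<in> S - ?T} = topspace Y0 - (C0 \<union> f0 ` {x \<in> topspace X. f1 x \<in> C1})"
  proof -
    have "Inl y \<in> g1 ` C1 \<longleftrightarrow> y \<in> f0 ` {x \<in> topspace X. f1 x \<in> C1}" if "y \<in> topspace Y0" for y
      using Inl_g1[OF that] C1s by auto
    then show ?thesis by (auto simp: S_def)
  qed
  have e1: "{y \<in> topspace Y1. g1 y \<in> S - ?T} = topspace Y1 - (C1 \<union> f1 ` {x \<in> topspace X. f0 x \<in> C0})"
  proof -
    have iff0: "g1 y \<in> Inl ` C0 \<longleftrightarrow> y \<in> f1 ` {x \<in> topspace X. f0 x \<in> C0}" if y1: "y \<in> topspace Y1" for y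
    proof
      assume "g1 y \<in> Inl ` C0"
      then obtain c where c: "c \<in> C0" "g1 y = Inl c" by auto
      then obtain x where "x \<in> topspace X" "c = f0 x" "y = f1 x"
        using Inl_g1[OF _ y1, of c] C0s by auto
      then show "y \<in> f1 ` {x \<in> topspace X. f0 x \<in> C0}" using c by auto
    next
      assume "y \<in> f1 ` {x \<in> topspace X. f0 x \<in> C0}"
      then show "g1 y \<in> Inl ` C0" by (auto simp: g1_f1)
    qed
    have iff1: "g1 y \<in> g1 ` C1 \<longleftrightarrow> y \<in> C1" if "y \<in> topspace Y1" for y
      using g1_inj[OF that] C1s by auto
    show ?thesis
      apply (rule set_eqI)
      subgoal for y using iff0[of y] iff1[of y] g1_in[of y] by blast
      done
  qed
  have "openin ZT (S - ?T)"
    unfolding openin_ZT e0 e1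
    using C0 C1 closed_f0_pre[OF C1] sw.closed_f0_pre[OF C0] by auto
  then show ?thesis using sub by (simp add: closedin_def topspace_ZT)
qed

lemma g1_inj_on: "inj_on g1 (topspace Y1)"
  by (rule inj_onI) (rule g1_inj)

lemma hausdorff_ZT: "Hausdorff_space ZT"
  unfolding Hausdorff_space_def topspace_ZT
proof (intro allI impI, elim conjE)
  fix z z' assume z: "z \<in> S" and z': "z' \<in> S" and ne: "z \<noteq> z'"
  define A0 where "A0 = {y \<in> topspace Y0. Inl y = z}"
  define A0' where "A0' = {y \<in> topspace Y0. Inl y = z'}"
  define A1 where "A1 = {y \<in> topspace Y1. g1 y = z}"
  define A1' where "A1' = {y \<in> topspace Y1. g1 y = z'}"
  have fin0: "finite {y \<in> D. f y = w}" if "inj_on f D" for f :: "'c \<Rightarrow> 'a + 'b" and D w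
  proof -
    have "{y \<in> D. f y = w} = f -` {w} \<inter> D" by auto
    then show ?thesis using finite_vimage_IntI[OF _ that, of "{w}"] by simp
  qed
  have fin: "finite A0" "finite A0'" "finite A1" "finite A1'"
    unfolding A0_def A0'_def A1_def A1'_def using fin0 g1_inj_on inj_Inl by metis+
  have "compactin Y0 A0" "compactin Y0 A0'" "compactin Y1 A1" "compactin Y1 A1'"
    using fin by (auto intro!: finite_imp_compactin simp: A0_def A0'_def A1_def A1'_def)
  moreover have "disjnt A0 A0'" "disjnt A1 A1'" using ne by (auto simp: A0_def A0'_def A1_def A1'_def disjnt_def)
  ultimately obtain U0 V0 U1 V1 where
    U0: "openin Y0 U0" "openin Y0 V0" "A0 \<subseteq> U0" "A0' \<subseteq> V0" "disjnt U0 V0" and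
    U1: "openin Y1 U1" "openin Y1 V1" "A1 \<subseteq> U1" "A1' \<subseteq> V1" "disjnt U1 V1"
    using h0 h1 unfolding Hausdorff_space_compact_sets by meson
  define W where "W = S - (Inl ` (topspace Y0 - U0) \<union> g1 ` (topspace Y1 - U1))"
  define W' where "W' = S - (Inl ` (topspace Y0 - V0) \<union> g1 ` (topspace Y1 - V1))"
  have "openin ZT W" unfolding W_def
    by (metis topspace_ZT openin_diff openin_topspace closed_images closedin_diff closedin_topspace U0(1) U1(1))
  moreover have "openin ZT W'" unfolding W'_def
    by (metis topspace_ZT openin_diff openin_topspace closed_images closedin_diff closedin_topspace U0(2) U1(2))
  moreover have "z \<in> W" using z U0(3) U1(3) g1_inj_on unfolding W_def A0_def A1_def by (auto dest: inj_onD)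
  moreover have "z' \<in> W'" using z' U0(4) U1(4) g1_inj_on unfolding W'_def A0'_def A1'_def by (auto dest: inj_onD)
  moreover have "disjnt W W'"
    unfolding disjnt_def
  proof (rule equals0I)
    fix w assume w: "w \<in> W \<inter> W'"
    then have "w \<in> S" by (auto simp: W_def)
    then show False
    proof (cases rule: S_cases)
      case (1 a)
      then have "a \<in> U0" "a \<in> V0" using w by (auto simp: W_def W'_def)
      then show False using U0(5) by (auto simp: disjnt_def)
    next
      case (2 b)
      then have "b \<in> U1" "b \<in> V1" using w by (auto simp: W_def W'_def)
      then show False using U1(5) by (auto simp: disjnt_def)
    qed
  qed
  ultimately show "\<exists>U V. openin ZT U \<and> openin ZT V \<and> z \<in> U \<and> z' \<in> V \<and> disjnt U V" by blast
qed

lemma compact_ZT: "compact_space ZT"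
proof -
  have "compactin ZT (Inl ` topspace Y0)" using c0 cont_g0 compact_space_def image_compactin by blast
  moreover have "compactin ZT (g1 ` topspace Y1)" using c1 cont_g1 compact_space_def image_compactin by blast
  ultimately show ?thesis unfolding compact_space_def topspace_ZT S_def by (rule compactin_Un)
qed

end



lemma img_compact:
  assumes "closedin (prod_topology A B) K" "compact_space A" "compact_space B"
    "continuous_map A Z p" "continuous_map B Z q"
  shows "compactin (prod_topology Z Z) ((\<lambda>z. (p (fst z), q (snd z))) ` K)"
proof -
  have "compact_space (prod_topology A B)" using assms(2,3) by (simp add: compact_space_prod_topology)
  then have "compactin (prod_topology A B) K" using assms(1) by (rule closedin_compact_space)
  moreover have "continuous_map (prod_topology A B) (prod_topology Z Z) (\<lambda>z. (p (fst z), q (snd z)))"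
    by (intro continuous_map_pairedI continuous_map_compose[OF continuous_map_fst assms(4), unfolded o_def]
          continuous_map_compose[OF continuous_map_snd assms(5), unfolded o_def])
  ultimately show ?thesis by (rule image_compactin)
qed

context glue begin

lemma dZ_zero: "w \<in> S \<Longrightarrow> dZ w w = 0"
  by (erule S_cases) (auto simp: dZ_00 dZ_11 d0_0 d1_0)

lemma dZ_tri:
  assumes "w1 \<in> S" "w2 \<in> S" "w3 \<in> S"
  shows "dZ w1 w3 \<le> dZ w1 w2 + dZ w2 w3"
  using assms(1)
proof (cases rule: S_cases)
  case (1 a)
  note a = this
  show ?thesis using assms(2)
  proof (cases rule: S_cases)
    case (1 b)
    show ?thesis using assms(3)
    proof (cases rule: S_cases)
      case (1 c) then show ?thesis using a \<open>b \<in> _\<close> \<open>w2 = _\<close> by (simp add: dZ_00 d0_tri)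
    next
      case (2 c) then show ?thesis using a \<open>b \<in> _\<close> \<open>w2 = _\<close> by (simp add: dZ_00 dZ_01 tri001)
    qed
  next
    case (2 b)
    show ?thesis using assms(3)
    proof (cases rule: S_cases)
      case (1 c) then show ?thesis using a \<open>b \<in> _\<close> \<open>w2 = _\<close> tri010[of a b c]
        by (simp add: dZ_00 dZ_01 dZ_10 sw.M_def)
    next
      case (2 c) then show ?thesis using a \<open>b \<in> _\<close> \<open>w2 = _\<close> by (simp add: dZ_11 dZ_01 tri011)
    qed
  qed
next
  case (2 a)
  note a = this
  show ?thesis using assms(2)
  proof (cases rule: S_cases)
    case (1 b)
    show ?thesis using assms(3)
    proof (cases rule: S_cases)
      case (1 c) then show ?thesis using a \<open>b \<in> _\<close> \<open>w2 = _\<close> by (simp add: dZ_00 dZ_10 sw.tri011)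
    next
      case (2 c) then show ?thesis using a \<open>b \<in> _\<close> \<open>w2 = _\<close> sw.tri010[of a b c]
        by (simp add: dZ_11 dZ_01 dZ_10 M_def)
    qed
  next
    case (2 b)
    show ?thesis using assms(3)
    proof (cases rule: S_cases)
      case (1 c) then show ?thesis using a \<open>b \<in> _\<close> \<open>w2 = _\<close> by (simp add: dZ_11 dZ_10 sw.tri001)
    next
      case (2 c) then show ?thesis using a \<open>b \<in> _\<close> \<open>w2 = _\<close> by (simp add: dZ_11 d1_tri)
    qed
  qed
qed

lemma dZ_sep:
  assumes "w \<in> S" "w' \<in> S" "dZ w w' = 0" "dZ w' w = 0"
  shows "w = w'"
  using assms(1)
proof (cases rule: S_cases)
  case (1 a)
  note a = this
  show ?thesis using assms(2)
  proof (cases rule: S_cases)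
    case (1 b) then show ?thesis using a assms(3,4) s0 by (simp add: dZ_00 metCH_sep_def)
  next
    case (2 b)
    then have "M a b = 0" "sw.M b a = 0" using a assms(3,4) by (simp_all add: dZ_01 dZ_10)
    then obtain x where "x \<in> topspace X" "a = f0 x" "b = f1 x" using M_sep a 2 by blast
    then show ?thesis using a 2 by (simp add: g1_f1)
  qed
next
  case (2 a)
  note a = this
  show ?thesis using assms(2)
  proof (cases rule: S_cases)
    case (1 b)
    then have "M b a = 0" "sw.M a b = 0" using a assms(3,4) by (simp_all add: dZ_01 dZ_10)
    then obtain x where "x \<in> topspace X" "b = f0 x" "a = f1 x" using M_sep a 1 by blast
    then show ?thesis using a 1 by (simp add: g1_f1)
  next
    case (2 b)
    then have "d1 a b = 0" "d1 b a = 0" using a assms(3,4) by (simp_all add: dZ_11)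
    then have "a = b" using s1 a 2 unfolding metCH_sep_def by blast
    then show ?thesis using a 2 by simp
  qed
qed

lemma dZ_closed:
  "closedin (prod_topology ZT ZT) {p \<in> topspace (prod_topology ZT ZT). dZ (fst p) (snd p) \<le> u}"
proof -
  define K00 where "K00 = {z \<in> topspace (prod_topology Y0 Y0). d0 (fst z) (snd z) \<le> u}"
  define K01 where "K01 = {z \<in> topspace (prod_topology Y0 Y1). M (fst z) (snd z) \<le> u}"
  define K10 where "K10 = {z \<in> topspace (prod_topology Y1 Y0). sw.M (fst z) (snd z) \<le> u}"
  define K11 where "K11 = {z \<in> topspace (prod_topology Y1 Y1). d1 (fst z) (snd z) \<le> u}"
  have cl: "closedin (prod_topology Y0 Y0) K00" "closedin (prod_topology Y0 Y1) K01"
     "closedin (prod_topology Y1 Y0) K10" "closedin (prod_topology Y1 Y1) K11"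
    unfolding K00_def K01_def K10_def K11_def
    using lsc_closed[OF lsc_metric[OF s0]] M_closed sw.M_closed lsc_closed[OF lsc_metric[OF s1]]
    by auto
  let ?F00 = "(\<lambda>z. (Inl (fst z), Inl (snd z))) ` K00"
  let ?F01 = "(\<lambda>z. (Inl (fst z), g1 (snd z))) ` K01"
  let ?F10 = "(\<lambda>z. (g1 (fst z), Inl (snd z))) ` K10"
  let ?F11 = "(\<lambda>z. (g1 (fst z), g1 (snd z))) ` K11"
  have "compactin (prod_topology ZT ZT) (?F00 \<union> ?F01 \<union> ?F10 \<union> ?F11)"
    by (intro compactin_Un img_compact[OF cl(1) c0 c0 cont_g0 cont_g0] img_compact[OF cl(2) c0 c1 cont_g0 cont_g1]
        img_compact[OF cl(3) c1 c0 cont_g1 cont_g0] img_compact[OF cl(4) c1 c1 cont_g1 cont_g1])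
  then have "closedin (prod_topology ZT ZT) (?F00 \<union> ?F01 \<union> ?F10 \<union> ?F11)"
    by (rule compactin_imp_closedin[rotated]) (simp add: Hausdorff_space_prod_topology hausdorff_ZT)
  moreover have "?F00 \<union> ?F01 \<union> ?F10 \<union> ?F11 = {p \<in> topspace (prod_topology ZT ZT). dZ (fst p) (snd p) \<le> u}"
  proof (rule set_eqI)
    fix p :: "('a + 'b) \<times> ('a + 'b)"
    obtain w w' where p: "p = (w, w')" by (cases p)
    show "p \<in> ?F00 \<union> ?F01 \<union> ?F10 \<union> ?F11 \<longleftrightarrow> p \<in> {p \<in> topspace (prod_topology ZT ZT). dZ (fst p) (snd p) \<le> u}"
    proof
      assume "p \<in> ?F00 \<union> ?F01 \<union> ?F10 \<union> ?F11"
      then show "p \<in> {p \<in> topspace (prod_topology ZT ZT). dZ (fst p) (snd p) \<le> u}"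
        unfolding K00_def K01_def K10_def K11_def topspace_ZT
        by (auto simp: dZ_00 dZ_01 dZ_10 dZ_11 g1_in S_def topspace_ZT)
    next
      assume "p \<in> {p \<in> topspace (prod_topology ZT ZT). dZ (fst p) (snd p) \<le> u}"
      then have w: "w \<in> S" "w' \<in> S" "dZ w w' \<le> u" using p by (auto simp: topspace_ZT)
      show "p \<in> ?F00 \<union> ?F01 \<union> ?F10 \<union> ?F11"
        using w(1)
      proof (cases rule: S_cases)
        case (1 a)
        show ?thesis using w(2)
        proof (cases rule: S_cases)
          case (1 b)
          then have "(a, b) \<in> K00" using \<open>a \<in> _\<close> \<open>w = _\<close> w(3) by (simp add: K00_def dZ_00)
          then show ?thesis using p \<open>w = _\<close> 1 by force
        next
          case (2 b)
          then have "(a, b) \<in> K01" using \<open>a \<in> _\<close> \<open>w = _\<close> w(3) by (simp add: K01_def dZ_01)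
          then show ?thesis using p \<open>w = _\<close> 2 by force
        qed
      next
        case (2 a)
        show ?thesis using w(2)
        proof (cases rule: S_cases)
          case (1 b)
          then have "(a, b) \<in> K10" using \<open>a \<in> _\<close> \<open>w = _\<close> w(3) by (simp add: K10_def dZ_10)
          then show ?thesis using p \<open>w = _\<close> 1 by force
        next
          case (2 b)
          then have "(a, b) \<in> K11" using \<open>a \<in> _\<close> \<open>w = _\<close> w(3) by (simp add: K11_def dZ_11)
          then show ?thesis using p \<open>w = _\<close> 2 by force
        qed
      qed
    qed
  qed
  ultimately show ?thesis by simp
qed

lemma ZT_sep: "metCH_sep ZT dZ"
  unfolding metCH_sep_def
proof (intro conjI ballI allI impI)
  show "compact_space ZT" by (rule compact_ZT)
  show "Hausdorff_space ZT" by (rule hausdorff_ZT)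
next
  fix x assume "x \<in> topspace ZT" then show "dZ x x = 0" by (simp add: topspace_ZT dZ_zero)
next
  fix x y z assume "x \<in> topspace ZT" "y \<in> topspace ZT" "z \<in> topspace ZT"
  then show "dZ x z \<le> dZ x y + dZ y z" by (simp add: topspace_ZT dZ_tri)
next
  fix x y assume "x \<in> topspace ZT" "y \<in> topspace ZT" "dZ x y = 0 \<and> dZ y x = 0"
  then show "x = y" by (simp add: topspace_ZT dZ_sep)
next
  fix u :: ennreal
  have "{p \<in> topspace ZT \<times> topspace ZT. u < dZ (fst p) (snd p)}
      = topspace (prod_topology ZT ZT) - {p \<in> topspace (prod_topology ZT ZT). dZ (fst p) (snd p) \<le> u}"
    by auto
  moreover have "openin (prod_topology ZT ZT) (topspace (prod_topology ZT ZT) - {p \<in> topspace (prod_topology ZT ZT). dZ (fst p) (snd p) \<le> u})"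
    by (rule openin_diff[OF openin_topspace dZ_closed])
  ultimately show "openin (prod_topology ZT ZT) {p \<in> topspace ZT \<times> topspace ZT. u < dZ (fst p) (snd p)}"
    by simp
qed

lemma mor_g0: "metCH_mor Y0 d0 ZT dZ Inl"
  unfolding metCH_mor_def using cont_g0 by (simp add: dZ_00)

lemma mor_g1: "metCH_mor Y1 d1 ZT dZ g1"
  unfolding metCH_mor_def using cont_g1 by (simp add: dZ_11)

end



theorem corollary4p3:
  fixes X :: "'x topology" and dX :: "'x \<Rightarrow> 'x \<Rightarrow> ennreal"
    and Y0 :: "'a topology" and d0 :: "'a \<Rightarrow> 'a \<Rightarrow> ennreal"
    and Y1 :: "'b topology" and d1 :: "'b \<Rightarrow> 'b \<Rightarrow> ennreal"
    and P :: "'p topology" and dP :: "'p \<Rightarrow> 'p \<Rightarrow> ennreal"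
    and f0 :: "'x \<Rightarrow> 'a" and f1 :: "'x \<Rightarrow> 'b"
    and l0 :: "'a \<Rightarrow> 'p" and l1 :: "'b \<Rightarrow> 'p"
  assumes "metCH_sep X dX" and "metCH_sep Y0 d0" and "metCH_sep Y1 d1"
    and "metCH_emb X dX Y0 d0 f0" and "metCH_emb X dX Y1 d1 f1"
    and "metCH_pushout TYPE('a + 'b) X dX Y0 d0 Y1 d1 f0 f1 P dP l0 l1"
  shows "(\<forall>u\<in>topspace Y0. \<forall>v\<in>topspace Y0. dP (l0 u) (l0 v) = d0 u v)
       \<and> (\<forall>u\<in>topspace Y1. \<forall>v\<in>topspace Y1. dP (l1 u) (l1 v) = d1 u v)
       \<and> (\<forall>u\<in>topspace Y0. \<forall>v\<in>topspace Y1.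
            dP (l0 u) (l1 v) = (INF x\<in>topspace X. d0 u (f0 x) + d1 (f1 x) v))
       \<and> (\<forall>u\<in>topspace Y1. \<forall>v\<in>topspace Y0.
            dP (l1 u) (l0 v) = (INF x\<in>topspace X. d1 u (f1 x) + d0 (f0 x) v))"
proof -
  interpret G: glue X dX Y0 d0 Y1 d1 f0 f1
    by unfold_locales (rule assms)+
  have Psep: "metCH_sep P dP" and m0: "metCH_mor Y0 d0 P dP l0" and m1: "metCH_mor Y1 d1 P dP l1"
    and compat: "\<forall>x\<in>topspace X. l0 (f0 x) = l1 (f1 x)"
    using assms(6) unfolding metCH_pushout_def by auto
  have univ: "\<exists>h. metCH_mor P dP G.ZT G.dZ h \<and>
               (\<forall>y\<in>topspace Y0. h (l0 y) = Inl y) \<and>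
               (\<forall>y\<in>topspace Y1. h (l1 y) = G.g1 y)"
    using assms(6) G.ZT_sep G.mor_g0 G.mor_g1 G.g_compat unfolding metCH_pushout_def by blast
  then obtain h where hm: "metCH_mor P dP G.ZT G.dZ h"
    and h0: "\<forall>y\<in>topspace Y0. h (l0 y) = Inl y" and h1: "\<forall>y\<in>topspace Y1. h (l1 y) = G.g1 y"
    by blast
  have hne: "G.dZ (h p) (h q) \<le> dP p q" if "p \<in> topspace P" "q \<in> topspace P" for p q
    using hm that unfolding metCH_mor_def by blast
  have l0in: "l0 y \<in> topspace P" if "y \<in> topspace Y0" for y
    using m0 that unfolding metCH_mor_def continuous_map_def by blast
  have l1in: "l1 y \<in> topspace P" if "y \<in> topspace Y1" for y
    using m1 that unfolding metCH_mor_def continuous_map_def by blast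
  have l0ne: "dP (l0 u) (l0 v) \<le> d0 u v" if "u \<in> topspace Y0" "v \<in> topspace Y0" for u v
    using m0 that unfolding metCH_mor_def by blast
  have l1ne: "dP (l1 u) (l1 v) \<le> d1 u v" if "u \<in> topspace Y1" "v \<in> topspace Y1" for u v
    using m1 that unfolding metCH_mor_def by blast
  have Ptri: "dP p r \<le> dP p q + dP q r" if "p \<in> topspace P" "q \<in> topspace P" "r \<in> topspace P" for p q r
    using Psep that unfolding metCH_sep_def by blast
  have A: "dP (l0 u) (l0 v) = d0 u v" if "u \<in> topspace Y0" "v \<in> topspace Y0" for u v
  proof (rule antisym)
    show "dP (l0 u) (l0 v) \<le> d0 u v" using l0ne that .
    have "G.dZ (h (l0 u)) (h (l0 v)) \<le> dP (l0 u) (l0 v)" using hne l0in that by blast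
    then show "d0 u v \<le> dP (l0 u) (l0 v)" using h0 that by (simp add: G.dZ_00)
  qed
  have B: "dP (l1 u) (l1 v) = d1 u v" if "u \<in> topspace Y1" "v \<in> topspace Y1" for u v
  proof (rule antisym)
    show "dP (l1 u) (l1 v) \<le> d1 u v" using l1ne that .
    have "G.dZ (h (l1 u)) (h (l1 v)) \<le> dP (l1 u) (l1 v)" using hne l1in that by blast
    then show "d1 u v \<le> dP (l1 u) (l1 v)" using h1 that by (simp add: G.dZ_11)
  qed
  have C: "dP (l0 u) (l1 v) = (INF x\<in>topspace X. d0 u (f0 x) + d1 (f1 x) v)"
    if u: "u \<in> topspace Y0" and v: "v \<in> topspace Y1" for u v
  proof (rule antisym)
    show "dP (l0 u) (l1 v) \<le> (INF x\<in>topspace X. d0 u (f0 x) + d1 (f1 x) v)"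
    proof (rule INF_greatest)
      fix x assume x: "x \<in> topspace X"
      have "dP (l0 u) (l1 v) \<le> dP (l0 u) (l0 (f0 x)) + dP (l0 (f0 x)) (l1 v)"
        using Ptri l0in l1in u v x G.f0_in by blast
      also have "dP (l0 (f0 x)) (l1 v) = dP (l1 (f1 x)) (l1 v)" using compat x by simp
      also have "dP (l0 u) (l0 (f0 x)) + dP (l1 (f1 x)) (l1 v) \<le> d0 u (f0 x) + d1 (f1 x) v"
        using l0ne l1ne u v x G.f0_in G.f1_in by (intro add_mono) auto
      finally show "dP (l0 u) (l1 v) \<le> d0 u (f0 x) + d1 (f1 x) v" .
    qed
    have "G.dZ (h (l0 u)) (h (l1 v)) \<le> dP (l0 u) (l1 v)" using hne l0in l1in u v by blast
    then show "(INF x\<in>topspace X. d0 u (f0 x) + d1 (f1 x) v) \<le> dP (l0 u) (l1 v)"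
      using h0 h1 u v by (simp add: G.dZ_01 G.M_def)
  qed
  have D: "dP (l1 u) (l0 v) = (INF x\<in>topspace X. d1 u (f1 x) + d0 (f0 x) v)"
    if u: "u \<in> topspace Y1" and v: "v \<in> topspace Y0" for u v
  proof (rule antisym)
    show "dP (l1 u) (l0 v) \<le> (INF x\<in>topspace X. d1 u (f1 x) + d0 (f0 x) v)"
    proof (rule INF_greatest)
      fix x assume x: "x \<in> topspace X"
      have "dP (l1 u) (l0 v) \<le> dP (l1 u) (l1 (f1 x)) + dP (l1 (f1 x)) (l0 v)"
        using Ptri l0in l1in u v x G.f1_in by blast
      also have "dP (l1 (f1 x)) (l0 v) = dP (l0 (f0 x)) (l0 v)" using compat x by simp
      also have "dP (l1 u) (l1 (f1 x)) + dP (l0 (f0 x)) (l0 v) \<le> d1 u (f1 x) + d0 (f0 x) v"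
        using l0ne l1ne u v x G.f0_in G.f1_in by (intro add_mono) auto
      finally show "dP (l1 u) (l0 v) \<le> d1 u (f1 x) + d0 (f0 x) v" .
    qed
    have "G.dZ (h (l1 u)) (h (l0 v)) \<le> dP (l1 u) (l0 v)" using hne l0in l1in u v by blast
    then show "(INF x\<in>topspace X. d1 u (f1 x) + d0 (f0 x) v) \<le> dP (l1 u) (l0 v)"
      using h0 h1 u v by (simp add: G.dZ_10 G.sw.M_def)
  qed
  show ?thesis using A B C D by blast
qed


end
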